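(* Let $F$ be an infinite field and $n\ge3$. Let $z_1,\dots,z_k$ be distinct variables of degrees $g_1,\dots,g_k\in\{1,\dots,n-1\}$ with $g_1+\dots+g_k\le n-1$, and $y_1,\dots,y_t$ distinct variables of degree $0$. Then the pairwise distinct commutators $$[z_1,a^{(1)}_1y_1,\dots,a^{(1)}_ty_t,z_{\sigma(2)},a^{(2)}_1y_1,\dots,a^{(2)}_ty_t,\dots,z_{\sigma(k)},a^{(k)}_1y_1,\dots,a^{(k)}_ty_t],$$ with $\sigma\in S_k$, $\sigma(1)=1$ and $a^{(s)}_i\ge0$, are linearly independent modulo the $T_{\mathbb{Z}_n}$-ideal $I$ of graded identities of $UT_n(F)^{(-)}$.
   Context: $UT_n(F)^{(-)}$: $n\times n$ upper triangular matrices with bracket $[a,b]=ab-ba$ and canonical $\mathbb{Z}_n$-grading (degree-$k$ component spanned by $e_{ij}$, $j-i=k$); nonzero elements of $\mathbb{Z}_n$ are identified with $1,\dots,n-1$. $I$ is the set of polynomials in the free $\mathbb{Z}_n$-graded Lie algebra vanishing on $UT_n(F)^{(-)}$ under degree-respecting substitutions. Commutators are left normed; $ay$ inside a commutator means $y$ repeated $a$ times consecutively. *)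

theory Defs
  imports "HOL-Combinatorics.Permutations"
begin

(* n x n matrices over 'a are represented as functions nat => nat => 'a;
   indices are 0-based, matrix entries outside {0..<n} x {0..<n} are required to be 0
   by the grading predicate below. *)
type_synonym 'a mat = "nat \<Rightarrow> nat \<Rightarrow> 'a"

definition mmult :: "nat \<Rightarrow> 'a::comm_ring_1 mat \<Rightarrow> 'a mat \<Rightarrow> 'a mat" where
  "mmult n A B = (\<lambda>i j. \<Sum>l<n. A i l * B l j)"

definition lbr :: "nat \<Rightarrow> 'a::comm_ring_1 mat \<Rightarrow> 'a mat \<Rightarrow> 'a mat" where
  "lbr n A B = (\<lambda>i j. mmult n A B i j - mmult n B A i j)"

fun lcomm :: "nat \<Rightarrow> 'a::comm_ring_1 mat list \<Rightarrow> 'a mat" where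
  "lcomm n [] = (\<lambda>i j. 0)"
| "lcomm n (x # xs) = foldl (lbr n) x xs"

(* A lies in the degree-d component of the canonical Z_n-grading of UT_n(F):
   it is a linear combination of the e_ij with j - i = d *)
definition homog :: "nat \<Rightarrow> nat \<Rightarrow> 'a::zero mat \<Rightarrow> bool" where
  "homog n d A \<longleftrightarrow> (\<forall>i j. A i j \<noteq> 0 \<longrightarrow> i < n \<and> j < n \<and> j = i + d)"

(* variables: Z s = z_(s+1) (degree g s), Y i = y_(i+1) (degree 0) *)
datatype var = Z nat | Y nat

definition eval_word :: "nat \<Rightarrow> (var \<Rightarrow> 'a::comm_ring_1 mat) \<Rightarrow> var list \<Rightarrow> 'a mat" where
  "eval_word n \<phi> w = lcomm n (map \<phi> w)"

(* the commutator  [z_1, a^(1)_1 y_1, ..., a^(1)_t y_t, z_sigma(2), ..., z_sigma(k), a^(k)_1 y_1, ..., a^(k)_t y_t]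
   as a word (0-indexed) *)
definition comm_word :: "nat \<Rightarrow> nat \<Rightarrow> (nat \<Rightarrow> nat) \<Rightarrow> (nat \<Rightarrow> nat \<Rightarrow> nat) \<Rightarrow> var list" where
  "comm_word k t \<sigma> a =
     concat (map (\<lambda>s. Z (\<sigma> s) # concat (map (\<lambda>i. replicate (a s i) (Y i)) [0..<t])) [0..<k])"

definition comm_words :: "nat \<Rightarrow> nat \<Rightarrow> var list set" where
  "comm_words k t = {comm_word k t \<sigma> a | \<sigma> a. \<sigma> permutes {..<k} \<and> \<sigma> 0 = 0}"

definition graded_subst :: "nat \<Rightarrow> nat \<Rightarrow> (nat \<Rightarrow> nat) \<Rightarrow> nat \<Rightarrow> (var \<Rightarrow> 'a::zero mat) \<Rightarrow> bool" where
  "graded_subst n k g t \<phi> \<longleftrightarrow>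
     (\<forall>s<k. homog n (g s) (\<phi> (Z s))) \<and> (\<forall>i<t. homog n 0 (\<phi> (Y i)))"

end

theory Submission
  imports Defs "HOL-Computational_Algebra.Polynomial"
begin

definition um :: "'a::comm_ring_1 \<Rightarrow> nat \<Rightarrow> nat \<Rightarrow> 'a mat" where
  "um c p q = (\<lambda>i j. if i = p \<and> j = q then c else 0)"
definition dg :: "nat \<Rightarrow> (nat \<Rightarrow> 'a::comm_ring_1) \<Rightarrow> 'a mat" where
  "dg n v = (\<lambda>i j. if i = j \<and> i < n then v i else 0)"

lemma mm_left: "d < n \<Longrightarrow> mmult n (um c 0 d) B i j = (if i = 0 then c * B d j else 0)"
proof -
  assume "d < n"
  have "mmult n (um c 0 d) B i j = (\<Sum>l<n. if l = d then (if i = 0 then c * B l j else 0) else 0)"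
    unfolding mmult_def um_def by (rule sum.cong) auto
  also have "\<dots> = (if i = 0 then c * B d j else 0)" using \<open>d < n\<close> by simp
  finally show ?thesis .
qed

lemma mm_right: "0 < n \<Longrightarrow> mmult n B (um c 0 d) i j = (if j = d then B i 0 * c else 0)"
proof -
  assume "0 < n"
  have "mmult n B (um c 0 d) i j = (\<Sum>l<n. if l = 0 then (if j = d then B i l * c else 0) else 0)"
    unfolding mmult_def um_def by (rule sum.cong) auto
  also have "\<dots> = (if j = d then B i 0 * c else 0)" using \<open>0 < n\<close> by simp
  finally show ?thesis .
qed

lemma lbr_dg: "d < n \<Longrightarrow> lbr n (um c 0 d) (dg n v) = um (c * (v d - v 0)) 0 d"
  apply (rule ext, rule ext)
  apply (simp add: lbr_def mm_left mm_right)
  apply (auto simp: um_def dg_def algebra_simps)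
  done

lemma lbr_z: "d < n \<Longrightarrow> 1 \<le> q \<Longrightarrow> lbr n (um c 0 d) (um 1 p q) = um (if d = p then c else 0) 0 q"
  apply (rule ext, rule ext)
  apply (simp add: lbr_def mm_left mm_right)
  apply (auto simp: um_def)
  done

lemma fold_ys: "d < n \<Longrightarrow> (\<forall>i\<in>set is. \<phi> (Y i) = dg n (\<lambda>j. v j i)) \<Longrightarrow>
  foldl (lbr n) (um c 0 d) (map \<phi> (map Y is)) = um (c * prod_list (map (\<lambda>i. v d i - v 0 i) is)) 0 d"
  by (induction "is" arbitrary: c) (auto simp: lbr_dg mult.assoc)

lemma prod_list_concat': "prod_list (concat xss) = prod_list (map prod_list xss)"
  by (induction xss) auto

lemma prod_blocks: "prod_list (map f (concat (map (\<lambda>i. replicate (a i) i) [0..<t]))) = (\<Prod>i<t. f i ^ a i)"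
  by (induction t) (auto simp: prod_list_concat' map_concat o_def)

lemma uni:
  assumes "infinite (UNIV::'a::field set)" "finite M" "\<forall>z::'a. (\<Sum>m\<in>M. d m * z^m) = 0" "m \<in> M"
  shows "d m = 0"
proof -
  define p where "p = (\<Sum>m\<in>M. monom (d m) m)"
  have ev: "poly p z = (\<Sum>m\<in>M. d m * z^m)" for z
    by (simp add: p_def poly_sum poly_monom)
  have "p = 0"
  proof (rule ccontr)
    assume "p \<noteq> 0"
    then have "finite {z. poly p z = 0}" by (rule poly_roots_finite)
    moreover have "{z. poly p z = 0} = UNIV" using assms(3) ev by auto
    ultimately show False using assms(1) by simp
  qed
  then have "coeff p m = 0" by simp
  moreover have "coeff p m = d m"
    using assms(2,4) by (simp add: p_def coeff_sum coeff_monom sum.delta' cong: if_cong)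
  ultimately show ?thesis by simp
qed
lemma poly_indep:
  assumes inf: "infinite (UNIV::'a::field set)"
  shows "finite S \<Longrightarrow> finite B \<Longrightarrow> (\<forall>b\<in>B. \<forall>b'\<in>B. (\<forall>e\<in>S. f b e = f b' e) \<longrightarrow> b = b') \<Longrightarrow>
    (\<forall>x. (\<Sum>b\<in>B. c b * (\<Prod>e\<in>S. x e ^ f b e)) = (0::'a)) \<Longrightarrow> \<forall>b\<in>B. c b = 0"
proof (induction S arbitrary: B rule: finite_induct)
  case empty
  show ?case
  proof
    fix b assume b: "b \<in> B"
    have "B = {b}" using empty.prems(2) b by auto
    then show "c b = 0" using empty.prems(3) by simp
  qed
next
  case (insert e S)
  show ?case
  proof
    fix b0 assume b0: "b0 \<in> B"
    define M where "M = (\<lambda>b. f b e) ` B"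
    define Bm where "Bm m = {b\<in>B. f b e = m}" for m
    have finM: "finite M" using insert.prems(1) by (simp add: M_def)
    have inner: "(\<Sum>b\<in>Bm m. c b * (\<Prod>e'\<in>S. y e' ^ f b e')) = 0" if "m \<in> M" for m y
    proof -
      define d where "d m = (\<Sum>b\<in>Bm m. c b * (\<Prod>e'\<in>S. y e' ^ f b e'))" for m
      have "\<forall>z. (\<Sum>m\<in>M. d m * z^m) = 0"
      proof
        fix z
        let ?x = "y(e := z)"
        have pS: "(\<Prod>e'\<in>S. ?x e' ^ f b e') = (\<Prod>e'\<in>S. y e' ^ f b e')" for b
          using insert.hyps(2) by (intro prod.cong) auto
        have "0 = (\<Sum>b\<in>B. c b * (\<Prod>e'\<in>insert e S. ?x e' ^ f b e'))"
          using insert.prems(3) by simp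
        also have "\<dots> = (\<Sum>b\<in>B. z ^ f b e * (c b * (\<Prod>e'\<in>S. y e' ^ f b e')))"
          using insert.hyps by (intro sum.cong refl) (simp only: prod.insert[OF insert.hyps] pS, simp add: algebra_simps)
        also have "\<dots> = (\<Sum>m\<in>M. (\<Sum>b\<in>Bm m. z ^ f b e * (c b * (\<Prod>e'\<in>S. y e' ^ f b e'))))"
          unfolding Bm_def using insert.prems(1) finM
          by (rule sum.group[symmetric]) (auto simp: M_def)
        also have "\<dots> = (\<Sum>m\<in>M. d m * z^m)"
          unfolding d_def by (intro sum.cong refl) (auto simp: sum_distrib_left Bm_def algebra_simps intro!: sum.cong)
        finally show "(\<Sum>m\<in>M. d m * z^m) = 0" by simp
      qed
      from uni[OF inf finM this that] show ?thesis by (simp add: d_def)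
    qed
    have "\<forall>b\<in>Bm (f b0 e). c b = 0"
    proof (rule insert.IH)
      show "finite (Bm (f b0 e))" using insert.prems(1) by (simp add: Bm_def)
      show "\<forall>b\<in>Bm (f b0 e). \<forall>b'\<in>Bm (f b0 e). (\<forall>e\<in>S. f b e = f b' e) \<longrightarrow> b = b'"
        using insert.prems(2) by (auto simp: Bm_def)
      show "\<forall>x. (\<Sum>b\<in>Bm (f b0 e). c b * (\<Prod>e\<in>S. x e ^ f b e)) = 0"
        using inner b0 by (auto simp: M_def)
    qed
    then show "c b0 = 0" using b0 by (auto simp: Bm_def)
  qed
qed
lemma comm_word_cong:
  "(\<forall>s<k. \<sigma> s = \<sigma>' s) \<Longrightarrow> (\<forall>s<k. \<forall>i<t. a s i = a' s i) \<Longrightarrow> comm_word k t \<sigma> a = comm_word k t \<sigma>' a'"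
  unfolding comm_word_def by (auto intro!: arg_cong[where f=concat] map_cong)

lemma ys_map: "concat (map (\<lambda>i. replicate (a s i) (Y i)) [0..<t]) = map Y (concat (map (\<lambda>i. replicate (a s i) i) [0..<t]))"
  by (simp add: map_concat o_def)

lemma eval_main:
  fixes \<phi> :: "var \<Rightarrow> 'a::comm_ring_1 mat"
  assumes tau: "\<tau> permutes {..<k}" "\<tau> 0 = 0"
    and sig: "\<sigma> permutes {..<k}" "\<sigma> 0 = 0"
    and k: "1 \<le> k" and g: "\<forall>s<k. 1 \<le> g s"
    and Pmono: "\<And>s s'. s < s' \<Longrightarrow> s' \<le> k \<Longrightarrow> P s < P s'"
    and P0: "P 0 = 0" and PSuc: "\<And>m. P (Suc m) = P m + g (\<tau> m)" and Pk: "P k < n"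
    and phiZ: "\<And>m. m < k \<Longrightarrow> \<phi> (Z m) = um 1 (P (inv \<tau> m)) (P (inv \<tau> m) + g m)"
    and phiY: "\<And>i. \<phi> (Y i) = dg n (\<lambda>j. v j i)"
    and v0: "\<And>i. v 0 i = 0"
  shows "eval_word n \<phi> (comm_word k t \<sigma> a) 0 (P k) =
    (if \<forall>s<k. \<sigma> s = \<tau> s then (\<Prod>s<k. \<Prod>i<t. v (P (Suc s)) i ^ a s i) else 0)"
proof -
  define blk where "blk s = Z (\<sigma> s) # concat (map (\<lambda>i. replicate (a s i) (Y i)) [0..<t])" for s
  have Ple: "m \<le> k \<Longrightarrow> P m \<le> P k" for m using Pmono[of m k] by (cases "m = k") auto
  have invlt: "m < k \<Longrightarrow> inv \<tau> m < k" for m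
    using permutes_inv[OF tau(1)] permutes_in_image by fastforce
  have tinv: "\<tau> (inv \<tau> m) = m" for m using permutes_inverses(1)[OF tau(1)] .
  have inv0: "inv \<tau> 0 = 0" using permutes_inverses(2)[OF tau(1), of 0] tau(2) by simp
  have sigk: "m < k \<Longrightarrow> \<sigma> m < k" for m using sig(1) permutes_in_image by fastforce
  have inv_bound: "m < k \<Longrightarrow> P (inv \<tau> m) + g m < n" for m
    using PSuc[of "inv \<tau> m"] tinv[of m] Ple[of "Suc (inv \<tau> m)"] invlt[of m] Pk by simp
  have n0: "0 < n" using Pk by simp
  have inv_main: "m \<le> k \<Longrightarrow> \<exists>c d. foldl (lbr n) (um 1 0 0) (map \<phi> (concat (map blk [0..<m]))) = um c 0 d \<and> d < n
     \<and> ((\<forall>s<m. \<sigma> s = \<tau> s) \<longrightarrow> c = (\<Prod>s<m. \<Prod>i<t. v (P (Suc s)) i ^ a s i) \<and> d = P m)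
     \<and> (\<not>(\<forall>s<m. \<sigma> s = \<tau> s) \<longrightarrow> c = 0)" for m
  proof (induction m)
    case 0 then show ?case using P0 n0 by auto
  next
    case (Suc m)
    then obtain c d where cd: "foldl (lbr n) (um 1 0 0) (map \<phi> (concat (map blk [0..<m]))) = um c 0 d" "d < n"
      "(\<forall>s<m. \<sigma> s = \<tau> s) \<longrightarrow> c = (\<Prod>s<m. \<Prod>i<t. v (P (Suc s)) i ^ a s i) \<and> d = P m"
      "\<not>(\<forall>s<m. \<sigma> s = \<tau> s) \<longrightarrow> c = 0" by auto
    have mk: "m < k" using Suc.prems by simp
    define p where "p = P (inv \<tau> (\<sigma> m))"
    define d' where "d' = p + g (\<sigma> m)"
    define c' where "c' = (if d = p then c else 0)"
    define L where "L = concat (map (\<lambda>i. replicate (a m i) i) [0..<t])"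
    have d'n: "d' < n" unfolding d'_def p_def using inv_bound sigk mk by simp
    have g1: "1 \<le> d'" unfolding d'_def using g sigk mk by force
    have "foldl (lbr n) (um 1 0 0) (map \<phi> (concat (map blk [0..<Suc m])))
        = foldl (lbr n) (lbr n (um c 0 d) (\<phi> (Z (\<sigma> m)))) (map \<phi> (map Y L))"
      by (simp add: cd(1) blk_def ys_map L_def)
    also have "lbr n (um c 0 d) (\<phi> (Z (\<sigma> m))) = um c' 0 d'"
    proof -
      have "\<phi> (Z (\<sigma> m)) = um 1 p d'" using phiZ[OF sigk[OF mk]] by (simp add: p_def d'_def)
      then show ?thesis by (simp add: lbr_z[OF cd(2) g1] c'_def)
    qed
    also have "foldl (lbr n) (um c' 0 d') (map \<phi> (map Y L)) = um (c' * (\<Prod>i<t. v d' i ^ a m i)) 0 d'"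
      using fold_ys[OF d'n, of L \<phi> v c'] phiY by (simp add: L_def prod_blocks v0)
    finally have F: "foldl (lbr n) (um 1 0 0) (map \<phi> (concat (map blk [0..<Suc m]))) = um (c' * (\<Prod>i<t. v d' i ^ a m i)) 0 d'" .
    show ?case
    proof (intro exI conjI)
      show "foldl (lbr n) (um 1 0 0) (map \<phi> (concat (map blk [0..<Suc m]))) = um (c' * (\<Prod>i<t. v d' i ^ a m i)) 0 d'" by (rule F)
      show "d' < n" by (rule d'n)
      show "(\<forall>s<Suc m. \<sigma> s = \<tau> s) \<longrightarrow> c' * (\<Prod>i<t. v d' i ^ a m i) = (\<Prod>s<Suc m. \<Prod>i<t. v (P (Suc s)) i ^ a s i) \<and> d' = P (Suc m)"
      proof
        assume ag: "\<forall>s<Suc m. \<sigma> s = \<tau> s"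
        then have sm: "\<sigma> m = \<tau> m" by simp
        have im: "inv \<tau> (\<sigma> m) = m" using sm permutes_inverses(2)[OF tau(1)] by simp
        have "c = (\<Prod>s<m. \<Prod>i<t. v (P (Suc s)) i ^ a s i)" "d = P m" using cd(3) ag by auto
        moreover have "d' = P (Suc m)" unfolding d'_def p_def im using PSuc sm by simp
        moreover have "p = P m" unfolding p_def im ..
        ultimately show "c' * (\<Prod>i<t. v d' i ^ a m i) = (\<Prod>s<Suc m. \<Prod>i<t. v (P (Suc s)) i ^ a s i) \<and> d' = P (Suc m)"
          by (simp add: c'_def)
      qed
      show "\<not>(\<forall>s<Suc m. \<sigma> s = \<tau> s) \<longrightarrow> c' * (\<Prod>i<t. v d' i ^ a m i) = 0"
      proof
        assume nag: "\<not>(\<forall>s<Suc m. \<sigma> s = \<tau> s)"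
        show "c' * (\<Prod>i<t. v d' i ^ a m i) = 0"
        proof (cases "\<forall>s<m. \<sigma> s = \<tau> s")
          case False then show ?thesis using cd(4) by (simp add: c'_def)
        next
          case True
          then have dm: "d = P m" using cd(3) by simp
          have "\<sigma> m \<noteq> \<tau> m" using True nag less_Suc_eq by auto
          then have ne: "inv \<tau> (\<sigma> m) \<noteq> m" using tinv by metis
          have lt: "inv \<tau> (\<sigma> m) < k" using invlt sigk mk by simp
          have "P (inv \<tau> (\<sigma> m)) \<noteq> P m"
          proof
            assume "P (inv \<tau> (\<sigma> m)) = P m"
            then show False using ne lt mk Pmono[of "inv \<tau> (\<sigma> m)" m] Pmono[of m "inv \<tau> (\<sigma> m)"]
              by (cases "inv \<tau> (\<sigma> m) < m") auto
          qed
          then show ?thesis by (simp add: c'_def dm p_def)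
        qed
      qed
    qed
  qed
  have cw: "comm_word k t \<sigma> a = concat (map blk [0..<k])" unfolding comm_word_def blk_def ..
  obtain rest where rest: "concat (map blk [0..<k]) = Z 0 # rest"
  proof -
    have "[0..<k] = 0 # [1..<k]" using k by (simp add: upt_conv_Cons)
    then have "concat (map blk [0..<k]) = Z 0 # (concat (map (\<lambda>i. replicate (a 0 i) (Y i)) [0..<t]) @ concat (map blk [1..<k]))"
      using sig(2) by (simp add: blk_def)
    then show ?thesis using that by blast
  qed
  have z0: "\<phi> (Z 0) = um 1 0 (g 0)" using phiZ[of 0] k inv0 P0 by simp
  have g0: "1 \<le> g 0" using g k by simp
  have "eval_word n \<phi> (comm_word k t \<sigma> a) = foldl (lbr n) (um 1 0 0) (map \<phi> (concat (map blk [0..<k])))"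
    unfolding eval_word_def cw rest by (simp add: z0 lbr_z[OF n0 g0])
  moreover obtain c d where "foldl (lbr n) (um 1 0 0) (map \<phi> (concat (map blk [0..<k]))) = um c 0 d" "d < n"
      "(\<forall>s<k. \<sigma> s = \<tau> s) \<longrightarrow> c = (\<Prod>s<k. \<Prod>i<t. v (P (Suc s)) i ^ a s i) \<and> d = P k"
      "\<not>(\<forall>s<k. \<sigma> s = \<tau> s) \<longrightarrow> c = 0" using inv_main[of k] by auto
  ultimately show ?thesis by (auto simp: um_def)
qed
theorem mainTheorem16:
  fixes n k t :: nat and g :: "nat \<Rightarrow> nat" and c :: "var list \<Rightarrow> 'a::field"
  assumes "infinite (UNIV :: 'a set)"
    and "n \<ge> 3" and "k \<ge> 1"
    and "\<forall>s<k. 1 \<le> g s \<and> g s \<le> n - 1"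
    and "(\<Sum>s<k. g s) \<le> n - 1"
    and "finite {w. c w \<noteq> 0}"
    and "{w. c w \<noteq> 0} \<subseteq> comm_words k t"
    and "\<forall>\<phi> :: var \<Rightarrow> 'a mat. graded_subst n k g t \<phi> \<longrightarrow>
           (\<forall>i j. (\<Sum>w\<in>{w. c w \<noteq> 0}. c w * eval_word n \<phi> w i j) = 0)"
  shows "\<forall>w. c w = 0"
proof (rule ccontr)
  assume "\<not> (\<forall>w. c w = 0)"
  then obtain w0 where cw0: "c w0 \<noteq> 0" by auto
  define W where "W = {w. c w \<noteq> 0}"
  have w0W: "w0 \<in> W" using cw0 by (simp add: W_def)
  then obtain \<tau> a0 where tau: "\<tau> permutes {..<k}" "\<tau> 0 = 0" and w0: "w0 = comm_word k t \<tau> a0"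
    using assms(7) by (auto simp: W_def comm_words_def)
  have g: "\<forall>s<k. 1 \<le> g s" using assms(4) by simp
  define P where "P m = (\<Sum>r<m. g (\<tau> r))" for m
  have PSuc: "P (Suc m) = P m + g (\<tau> m)" for m by (simp add: P_def)
  have P0: "P 0 = 0" by (simp add: P_def)
  have tk: "m < k \<Longrightarrow> \<tau> m < k" for m using tau(1) permutes_in_image by fastforce
  have Pmono: "s < s' \<Longrightarrow> s' \<le> k \<Longrightarrow> P s < P s'" for s s'
  proof (induction s')
    case 0 then show ?case by simp
  next
    case (Suc s')
    have "1 \<le> g (\<tau> s')" using g tk Suc.prems by simp
    then have "P s' < P (Suc s')" by (simp add: PSuc)
    then show ?case using Suc by (cases "s = s'") auto
  qed
  have "P k = (\<Sum>s<k. g s)"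
  proof -
    have "P k = (\<Sum>s\<in>\<tau> ` {..<k}. g s)"
      unfolding P_def by (rule sum.reindex[symmetric, unfolded o_def]) (rule permutes_inj_on[OF tau(1)])
    then show ?thesis using permutes_image[OF tau(1)] by simp
  qed
  then have Pk: "P k < n" using assms(2,5) by simp
  have Ple: "m \<le> k \<Longrightarrow> P m \<le> P k" for m using Pmono[of m k] by (cases "m = k") auto
  have invlt: "m < k \<Longrightarrow> inv \<tau> m < k" for m
    using permutes_inv[OF tau(1)] permutes_in_image by fastforce
  have tinv: "\<tau> (inv \<tau> m) = m" for m using permutes_inverses(1)[OF tau(1)] .
  have Pinj: "s < k \<Longrightarrow> s' < k \<Longrightarrow> P (Suc s) = P (Suc s') \<Longrightarrow> s = s'" for s s'
    using Pmono[of "Suc s" "Suc s'"] Pmono[of "Suc s'" "Suc s"] by (cases "s < s'"; cases "s' < s") auto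
  define S where "S = {..<k} \<times> {..<t}"
  define B where "B = {w\<in>W. \<exists>a. w = comm_word k t \<tau> a}"
  define A where "A w = (SOME a. w = comm_word k t \<tau> a)" for w
  have A: "w \<in> B \<Longrightarrow> w = comm_word k t \<tau> (A w)" for w
  proof -
    assume "w \<in> B"
    then have "\<exists>a. w = comm_word k t \<tau> a" by (simp add: B_def)
    then show ?thesis unfolding A_def by (rule someI_ex)
  qed
  have finW: "finite W" using assms(6) by (simp add: W_def)
  have finB: "finite B" using finW by (simp add: B_def)
  have w0B: "w0 \<in> B" using w0W w0 by (auto simp: B_def)
  have "\<forall>w\<in>B. c w = 0"
  proof (rule poly_indep[OF assms(1), where f = "\<lambda>w e. A w (fst e) (snd e)"])
    show "finite S" by (simp add: S_def)
    show "finite B" by (rule finB)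
    show "\<forall>b\<in>B. \<forall>b'\<in>B. (\<forall>e\<in>S. A b (fst e) (snd e) = A b' (fst e) (snd e)) \<longrightarrow> b = b'"
    proof (intro ballI impI)
      fix b b' assume bb: "b \<in> B" "b' \<in> B" and eq: "\<forall>e\<in>S. A b (fst e) (snd e) = A b' (fst e) (snd e)"
      have "comm_word k t \<tau> (A b) = comm_word k t \<tau> (A b')"
        by (rule comm_word_cong) (use eq in \<open>auto simp: S_def\<close>)
      then show "b = b'" using A bb by metis
    qed
    show "\<forall>x. (\<Sum>b\<in>B. c b * (\<Prod>e\<in>S. x e ^ A b (fst e) (snd e))) = 0"
    proof
      fix x :: "nat \<times> nat \<Rightarrow> 'a"
      define v where "v j i = (if \<exists>s<k. P (Suc s) = j then x (SOME s. s<k \<and> P (Suc s) = j, i) else 0)" for j i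
      have vP: "s < k \<Longrightarrow> v (P (Suc s)) i = x (s, i)" for s i
      proof -
        assume sk: "s < k"
        have "(SOME s'. s' < k \<and> P (Suc s') = P (Suc s)) = s"
          using Pinj sk by (intro some_equality) auto
        then show ?thesis using sk by (auto simp: v_def)
      qed
      have v0: "v 0 i = 0" for i
      proof -
        have "\<not> (\<exists>s<k. P (Suc s) = 0)"
        proof
          assume "\<exists>s<k. P (Suc s) = 0"
          then obtain s where "s < k" "P (Suc s) = 0" by blast
          then show False using Pmono[of 0 "Suc s"] P0 by simp
        qed
        then show ?thesis unfolding v_def by (rule if_not_P)
      qed
      define \<phi> :: "var \<Rightarrow> 'a mat" where "\<phi> = (\<lambda>r. case r of
          Z m \<Rightarrow> (if m < k then um 1 (P (inv \<tau> m)) (P (inv \<tau> m) + g m) else (\<lambda>i j. 0))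
        | Y i \<Rightarrow> dg n (\<lambda>j. v j i))"
      have phiZ: "m < k \<Longrightarrow> \<phi> (Z m) = um 1 (P (inv \<tau> m)) (P (inv \<tau> m) + g m)" for m
        by (simp add: \<phi>_def)
      have phiY: "\<phi> (Y i) = dg n (\<lambda>j. v j i)" for i by (simp add: \<phi>_def)
      have gs: "graded_subst n k g t \<phi>"
        unfolding graded_subst_def
      proof (intro conjI allI impI)
        fix m assume mk: "m < k"
        have "P (inv \<tau> m) + g m < n"
          using PSuc[of "inv \<tau> m"] tinv[of m] Ple[of "Suc (inv \<tau> m)"] invlt[OF mk] Pk by simp
        then show "homog n (g m) (\<phi> (Z m))"
          unfolding phiZ[OF mk] homog_def um_def by auto
      next
        fix i assume "i < t"
        show "homog n 0 (\<phi> (Y i))" unfolding phiY homog_def dg_def by auto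
      qed
      have ev: "eval_word n \<phi> (comm_word k t \<sigma> a) 0 (P k) =
          (if \<forall>s<k. \<sigma> s = \<tau> s then (\<Prod>s<k. \<Prod>i<t. v (P (Suc s)) i ^ a s i) else 0)"
        if "\<sigma> permutes {..<k}" "\<sigma> 0 = 0" for \<sigma> a
        by (rule eval_main[OF tau that assms(3) g Pmono P0 PSuc Pk phiZ phiY v0])
      have hyp: "(\<Sum>w\<in>W. c w * eval_word n \<phi> w 0 (P k)) = 0"
        using assms(8) gs by (simp add: W_def)
      have "(\<Sum>w\<in>W. c w * eval_word n \<phi> w 0 (P k)) = (\<Sum>w\<in>B. c w * eval_word n \<phi> w 0 (P k))"
      proof (rule sum.mono_neutral_right[OF finW])
        show "B \<subseteq> W" by (auto simp: B_def)
        show "\<forall>w\<in>W - B. c w * eval_word n \<phi> w 0 (P k) = 0"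
        proof
          fix w assume wW: "w \<in> W - B"
          then obtain \<sigma> a where sg: "\<sigma> permutes {..<k}" "\<sigma> 0 = 0" and w: "w = comm_word k t \<sigma> a"
            using assms(7) by (auto simp: W_def comm_words_def)
          have "\<not> (\<forall>s<k. \<sigma> s = \<tau> s)"
          proof
            assume "\<forall>s<k. \<sigma> s = \<tau> s"
            then have "w = comm_word k t \<tau> a" unfolding w by (intro comm_word_cong) auto
            then show False using wW by (auto simp: B_def)
          qed
          then have "eval_word n \<phi> w 0 (P k) = 0" using ev[OF sg, of a] w by (simp only: if_False)
          then show "c w * eval_word n \<phi> w 0 (P k) = 0" by simp
        qed
      qed
      also have "\<dots> = (\<Sum>b\<in>B. c b * (\<Prod>e\<in>S. x e ^ A b (fst e) (snd e)))"
      proof (rule sum.cong[OF refl])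
        fix w assume wB: "w \<in> B"
        have "eval_word n \<phi> w 0 (P k) = (\<Prod>s<k. \<Prod>i<t. v (P (Suc s)) i ^ A w s i)"
          using ev[OF tau, of "A w"] A[OF wB] by simp
        also have "\<dots> = (\<Prod>s<k. \<Prod>i<t. x (s, i) ^ A w s i)"
          using vP by (intro prod.cong refl) simp
        also have "\<dots> = (\<Prod>e\<in>S. x e ^ A w (fst e) (snd e))"
          unfolding S_def by (simp add: prod.cartesian_product case_prod_beta)
        finally show "c w * eval_word n \<phi> w 0 (P k) = c w * (\<Prod>e\<in>S. x e ^ A w (fst e) (snd e))" by simp
      qed
      finally show "(\<Sum>b\<in>B. c b * (\<Prod>e\<in>S. x e ^ A b (fst e) (snd e))) = 0" using hyp by simp
    qed
  qed
  then show False using w0B cw0 by simp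
qed
end
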